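(* Let $(G,\tau,\partial)$ be a Polish topometric group with the Steinhaus property. Then for any Polish topology $\tau'$ on $G$ such that $(G,\tau',\partial)$ is also a (Polish) topometric group, we have $\tau=\tau'$.
   Context: A topometric group is a triple $(G,\tau,\partial)$ with $(G,\tau)$ a topological group, $\partial$ a bi-invariant metric whose topology refines $\tau$ and which is $\tau$-lower semi-continuous ($\{(x,y)\colon\partial(x,y)\le r\}$ is $\tau$-closed for all $r$); it is Polish if $\tau$ is Polish. For $A\subseteq G$, $(A)_\varepsilon=\{g\colon\partial(g,A)<\varepsilon\}$. $A\subseteq G$ is $\sigma$-syndetic if $G$ is covered by countably many left translates of $A$. $(G,\tau,\partial)$ has the Steinhaus property if there is an integer $k$ such that for every symmetric $\sigma$-syndetic $A\subseteq G$ and every $\varepsilon>0$, $1_G\in\mathrm{Int}_\tau\big((A^k)_\varepsilon\big)$. *)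

theory Defs
  imports "HOL-Analysis.Analysis"
begin

text \<open>The group G is the carrier type 'a with a (not necessarily commutative)
group structure from the class group_add; the group operation is written +,
the identity 0 and inversion uminus.\<close>

definition polish_topology :: "'a topology \<Rightarrow> bool" where
  "polish_topology T \<longleftrightarrow> completely_metrizable_space T \<and> separable_space T"

definition topological_group :: "('a::group_add) topology \<Rightarrow> bool" where
  "topological_group T \<longleftrightarrow> topspace T = UNIV
     \<and> continuous_map (prod_topology T T) T (\<lambda>(x, y). x + y)
     \<and> continuous_map T T uminus"

definition topometric_group :: "('a::group_add) topology \<Rightarrow> ('a \<Rightarrow> 'a \<Rightarrow> real) \<Rightarrow> bool" where
  "topometric_group T d \<longleftrightarrow>
     topological_group T
     \<and> Metric_space UNIV d
     \<and> (\<forall>g x y. d (g + x) (g + y) = d x y \<and> d (x + g) (y + g) = d x y)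
     \<and> (\<forall>U. openin T U \<longrightarrow> openin (Metric_space.mtopology UNIV d) U)
     \<and> (\<forall>r. closedin (prod_topology T T) {(x, y). d x y \<le> r})"

definition polish_topometric_group :: "('a::group_add) topology \<Rightarrow> ('a \<Rightarrow> 'a \<Rightarrow> real) \<Rightarrow> bool" where
  "polish_topometric_group T d \<longleftrightarrow> topometric_group T d \<and> polish_topology T"

definition metric_nbhd :: "('a \<Rightarrow> 'a \<Rightarrow> real) \<Rightarrow> 'a set \<Rightarrow> real \<Rightarrow> 'a set" where
  "metric_nbhd d A e = {g. (INF a\<in>A. ereal (d g a)) < ereal e}"

fun set_power :: "('a::group_add) set \<Rightarrow> nat \<Rightarrow> 'a set" where
  "set_power A 0 = {0}"
| "set_power A (Suc k) = {a + b | a b. a \<in> A \<and> b \<in> set_power A k}"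

definition sigma_syndetic :: "('a::group_add) set \<Rightarrow> bool" where
  "sigma_syndetic A \<longleftrightarrow> (\<exists>C. countable C \<and> (\<Union>c\<in>C. (\<lambda>a. c + a) ` A) = UNIV)"

definition symmetric_set :: "('a::group_add) set \<Rightarrow> bool" where
  "symmetric_set A \<longleftrightarrow> uminus ` A = A"

definition steinhaus_property :: "('a::group_add) topology \<Rightarrow> ('a \<Rightarrow> 'a \<Rightarrow> real) \<Rightarrow> bool" where
  "steinhaus_property T d \<longleftrightarrow>
     (\<exists>k::nat. k \<ge> 1 \<and> (\<forall>A e. symmetric_set A \<and> sigma_syndetic A \<and> e > 0 \<longrightarrow>
        0 \<in> T interior_of (metric_nbhd d (set_power A k) e)))"

end

theory Submission
  imports Defs
begin


lemma tg_add: "topological_group X \<Longrightarrow> continuous_map (prod_topology X X) X (\<lambda>(x, y). x + y)"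
  by (simp add: topological_group_def)

lemma tg_top: "topological_group X \<Longrightarrow> topspace X = UNIV"
  by (simp add: topological_group_def)

lemma tg_uminus: "topological_group X \<Longrightarrow> continuous_map X X uminus"
  by (simp add: topological_group_def)

lemma tg_left: assumes "topological_group X" shows "continuous_map X X (\<lambda>y. a + y)"
proof -
  have "continuous_map X (prod_topology X X) (\<lambda>y. (a, y))"
    by (intro continuous_map_pairedI) (auto simp: tg_top[OF assms])
  from continuous_map_compose[OF this tg_add[OF assms]] show ?thesis by (simp add: o_def)
qed

lemma tg_right: assumes "topological_group X" shows "continuous_map X X (\<lambda>y. y + a)"
proof -
  have "continuous_map X (prod_topology X X) (\<lambda>y. (y, a))"
    by (intro continuous_map_pairedI) (auto simp: tg_top[OF assms])
  from continuous_map_compose[OF this tg_add[OF assms]] show ?thesis by (simp add: o_def)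
qed

lemma tg_open_pre: assumes "topological_group X" "continuous_map X X f" "openin X U"
  shows "openin X {x. f x \<in> U}"
  using openin_continuous_map_preimage[OF assms(2,3)] by (simp add: tg_top[OF assms(1)])

lemma tg_open_left: assumes "topological_group X" "openin X U"
  shows "openin X ((\<lambda>y. a + y) ` U)"
proof -
  have "(\<lambda>y. a + y) ` U = {x. -a + x \<in> U}"
    by (auto simp: image_iff add.assoc[symmetric]) (metis add.assoc add_minus_cancel)
  then show ?thesis using tg_open_pre[OF assms(1) tg_left[OF assms(1)] assms(2)] by simp
qed

lemma tg_open_right: assumes "topological_group X" "openin X U"
  shows "openin X ((\<lambda>y. y + a) ` U)"
proof -
  have "(\<lambda>y. y + a) ` U = {x. x + - a \<in> U}"
    by (auto simp: image_iff add.assoc) (metis diff_add_cancel diff_conv_add_uminus)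
  then show ?thesis using tg_open_pre[OF assms(1) tg_right[OF assms(1), of "-a"] assms(2)] by simp
qed

lemma tg_open_uminus: assumes "topological_group X" "openin X U"
  shows "openin X (uminus ` U)"
proof -
  have "uminus ` U = {x. - x \<in> U}"
    by (auto simp: image_iff) (metis minus_minus)
  then show ?thesis using tg_open_pre[OF assms(1) tg_uminus[OF assms(1)] assms(2)] by simp
qed

lemma tg_homeo_left: assumes "topological_group X" shows "homeomorphic_map X X (\<lambda>y. a + y)"
proof -
  have "homeomorphic_maps X X (\<lambda>y. a + y) (\<lambda>y. -a + y)"
    unfolding homeomorphic_maps_def
    using tg_left[OF assms] by (auto simp: add.assoc[symmetric])
  then show ?thesis using homeomorphic_map_maps by blast
qed

lemma tg_closure_left: assumes "topological_group X"
  shows "X closure_of ((\<lambda>y. a + y) ` S) = (\<lambda>y. a + y) ` (X closure_of S)"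
  using homeomorphic_map_closure_of[OF tg_homeo_left[OF assms]] by (simp add: tg_top[OF assms])

lemma tg_interior_left: assumes "topological_group X"
  shows "X interior_of ((\<lambda>y. a + y) ` S) = (\<lambda>y. a + y) ` (X interior_of S)"
  using homeomorphic_map_interior_of[OF tg_homeo_left[OF assms]] by (simp add: tg_top[OF assms])

lemma tg_split: assumes "topological_group X" "openin X V" "a + b \<in> V"
  shows "\<exists>W1 W2. openin X W1 \<and> openin X W2 \<and> a \<in> W1 \<and> b \<in> W2 \<and> (\<forall>x\<in>W1. \<forall>y\<in>W2. x + y \<in> V)"
proof -
  define S where "S = {p \<in> topspace (prod_topology X X). (\<lambda>(x, y). x + y) p \<in> V}"
  have o: "openin (prod_topology X X) S"
    unfolding S_def using openin_continuous_map_preimage[OF tg_add[OF assms(1)] assms(2)] .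
  have m: "(a, b) \<in> S"
    using assms by (simp add: S_def tg_top[OF assms(1)])
  obtain W1 W2 where W: "openin X W1" "openin X W2" "a \<in> W1" "b \<in> W2" "W1 \<times> W2 \<subseteq> S"
    using openin_prod_topology_alt[THEN iffD1, rule_format, OF o m] by blast
  have "\<forall>x\<in>W1. \<forall>y\<in>W2. x + y \<in> V"
  proof (intro ballI)
    fix x y assume "x \<in> W1" "y \<in> W2"
    then have "(x, y) \<in> S" using W(5) by blast
    then show "x + y \<in> V" by (simp add: S_def)
  qed
  then show ?thesis using W by blast
qed

lemma tg_sym: assumes "topological_group X" "openin X V" "0 \<in> V"
  shows "\<exists>W. openin X W \<and> 0 \<in> W \<and> symmetric_set W \<and> W \<subseteq> V"
proof -
  define W where "W = V \<inter> {x. - x \<in> V}"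
  have "openin X {x. - x \<in> V}" using tg_open_pre[OF assms(1) tg_uminus[OF assms(1)] assms(2)] .
  then have o: "openin X W" unfolding W_def using assms(2) by (rule openin_Int[rotated])
  have s: "uminus ` W = W"
  proof (rule set_eqI)
    fix x
    have "x \<in> uminus ` W \<longleftrightarrow> - x \<in> W"
      by (metis image_eqI minus_minus imageE)
    then show "x \<in> uminus ` W \<longleftrightarrow> x \<in> W" unfolding W_def by auto
  qed
  have "0 \<in> W" using assms(3) by (simp add: W_def)
  then show ?thesis using o s unfolding symmetric_set_def W_def by blast
qed

lemma set_power_mono: "A \<subseteq> B \<Longrightarrow> set_power A m \<subseteq> set_power B m"
  by (induction m) auto

lemma tg_power: assumes "topological_group X"
  shows "openin X V \<Longrightarrow> 0 \<in> V \<Longrightarrow> \<exists>W. openin X W \<and> 0 \<in> W \<and> symmetric_set W \<and> set_power W m \<subseteq> V"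
proof (induction m arbitrary: V)
  case 0
  then show ?case using tg_sym[OF assms, of V] by auto
next
  case (Suc m)
  obtain W1 W2 where W: "openin X W1" "openin X W2" "0 \<in> W1" "0 \<in> W2" "\<forall>x\<in>W1. \<forall>y\<in>W2. x + y \<in> V"
    using tg_split[OF assms Suc.prems(1), of 0 0] Suc.prems by auto
  obtain W' where W': "openin X W'" "0 \<in> W'" "set_power W' m \<subseteq> W2"
    using Suc.IH[OF W(2,4)] by blast
  obtain W where "openin X W" "0 \<in> W" "symmetric_set W" "W \<subseteq> W1 \<inter> W'"
    using tg_sym[OF assms, of "W1 \<inter> W'"] W W' by auto
  moreover have "set_power W (Suc m) \<subseteq> V"
    using set_power_mono[of W W' m] W W' \<open>W \<subseteq> W1 \<inter> W'\<close> by auto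
  ultimately show ?case by blast
qed




lemma tm_tg: "topometric_group X d \<Longrightarrow> topological_group X"
  by (simp add: topometric_group_def)

lemma tm_ms: "topometric_group X d \<Longrightarrow> Metric_space UNIV d"
  by (simp add: topometric_group_def)

lemma tm_inv: "topometric_group X d \<Longrightarrow> d (g + x) (g + y) = d x y \<and> d (x + g) (y + g) = d x y"
  by (simp add: topometric_group_def)

lemma tm_open_metric: assumes "topometric_group X d" "openin X W" "0 \<in> W"
  shows "\<exists>e>0. \<forall>x. d x 0 < e \<longrightarrow> x \<in> W"
proof -
  have ms: "Metric_space UNIV d" using tm_ms[OF assms(1)] .
  have "openin (Metric_space.mtopology UNIV d) W" using assms by (simp add: topometric_group_def)
  then obtain r where r: "r > 0" "Metric_space.mball UNIV d 0 r \<subseteq> W"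
    using Metric_space.openin_mtopology[OF ms] assms(3) by blast
  have "\<forall>x. d x 0 < r \<longrightarrow> x \<in> W"
  proof (intro allI impI)
    fix x assume "d x 0 < r"
    then have "d 0 x < r" using Metric_space.commute[OF ms] by metis
    then have "x \<in> Metric_space.mball UNIV d 0 r" by (simp add: Metric_space.mball_def[OF ms])
    then show "x \<in> W" using r by blast
  qed
  then show ?thesis using r by blast
qed

lemma metric_nbhd_sub: assumes "topometric_group X d" "\<forall>x. d x 0 < e \<longrightarrow> x \<in> W"
  shows "metric_nbhd d (set_power W k) e \<subseteq> set_power W (Suc k)"
proof
  fix g assume "g \<in> metric_nbhd d (set_power W k) e"
  then have "(INF a\<in>set_power W k. ereal (d g a)) < ereal e" by (simp add: metric_nbhd_def)
  then obtain a where a: "a \<in> set_power W k" "ereal (d g a) < ereal e"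
    by (subst (asm) INF_less_iff) blast
  have "d (g - a + a) (0 + a) = d (g - a) 0" using tm_inv[OF assms(1)] by blast
  then have "d (g - a) 0 = d g a" by simp
  then have "d (g - a) 0 < e" using a(2) by simp
  then have "g - a \<in> W" using assms(2) by blast
  moreover have "g = (g - a) + a" by simp
  ultimately have "\<exists>x y. g = x + y \<and> x \<in> W \<and> y \<in> set_power W k" using a(1) by blast
  then show "g \<in> set_power W (Suc k)" by (simp only: set_power.simps mem_Collect_eq)
qed

lemma sep_syndetic: assumes "topological_group X" "separable_space X" "openin X W" "0 \<in> W"
  shows "sigma_syndetic W"
proof -
  obtain C where C: "countable C" "X closure_of C = topspace X"
    using assms(2) unfolding separable_space_def by blast
  have "\<forall>g. \<exists>c\<in>C. -c + g \<in> W"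
  proof
    fix g
    have cm: "continuous_map X X (\<lambda>c. -c + g)"
      using continuous_map_compose[OF tg_uminus[OF assms(1)] tg_right[OF assms(1), of g]]
      by (simp add: o_def)
    have "openin X {c. -c + g \<in> W}" using tg_open_pre[OF assms(1) cm assms(3)] .
    moreover have "g \<in> {c. -c + g \<in> W}" using assms(4) by simp
    ultimately have "C \<inter> {c. -c + g \<in> W} \<noteq> {}"
      using C(2) unfolding dense_intersects_open by blast
    then show "\<exists>c\<in>C. -c + g \<in> W" by blast
  qed
  have "g \<in> (\<Union>c\<in>C. (\<lambda>a. c + a) ` W)" for g
  proof -
    obtain c where c: "c \<in> C" "-c + g \<in> W" using \<open>\<forall>g. \<exists>c\<in>C. -c + g \<in> W\<close> by blast
    have "g = c + (-c + g)" by (simp add: add.assoc[symmetric])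
    then show ?thesis using c by blast
  qed
  then have "(\<Union>c\<in>C. (\<lambda>a. c + a) ` W) = UNIV" by blast
  then show ?thesis using C(1) unfolding sigma_syndetic_def by blast
qed

lemma step1_zero: assumes tm: "topometric_group T d" and tm': "topometric_group T' d"
  and st: "steinhaus_property T d" and sep: "separable_space T'"
  and V: "openin T' V" "0 \<in> V"
  shows "0 \<in> T interior_of V"
proof -
  obtain k where k: "\<forall>A e. symmetric_set A \<and> sigma_syndetic A \<and> e > 0 \<longrightarrow>
        0 \<in> T interior_of (metric_nbhd d (set_power A k) e)"
    using st unfolding steinhaus_property_def by blast
  obtain W where W: "openin T' W" "0 \<in> W" "symmetric_set W" "set_power W (Suc k) \<subseteq> V"
    using tg_power[OF tm_tg[OF tm'] V] by blast
  obtain e where e: "e > 0" "\<forall>x. d x 0 < e \<longrightarrow> x \<in> W"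
    using tm_open_metric[OF tm' W(1,2)] by blast
  have "sigma_syndetic W" using sep_syndetic[OF tm_tg[OF tm'] sep W(1,2)] .
  then have "0 \<in> T interior_of (metric_nbhd d (set_power W k) e)"
    using k W(3) e(1) by blast
  moreover have "metric_nbhd d (set_power W k) e \<subseteq> V"
    using metric_nbhd_sub[OF tm e(2)] W(4) by blast
  ultimately show ?thesis using interior_of_mono by blast
qed

lemma step1: assumes tm: "topometric_group T d" and tm': "topometric_group T' d"
  and st: "steinhaus_property T d" and sep: "separable_space T'"
  and V: "openin T' V"
  shows "openin T V"
  unfolding openin_subopen[of T V]
proof
  fix x assume x: "x \<in> V"
  have tg: "topological_group T" using tm by (rule tm_tg)
  have tg': "topological_group T'" using tm' by (rule tm_tg)
  define V' where "V' = (\<lambda>y. -x + y) ` V"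
  have "openin T' V'" unfolding V'_def using tg_open_left[OF tg' V] .
  moreover have "0 \<in> V'" unfolding V'_def using x by (metis image_eqI left_minus)
  ultimately have z: "0 \<in> T interior_of V'" using step1_zero[OF tm tm' st sep] by blast
  have o: "openin T ((\<lambda>y. x + y) ` (T interior_of V'))"
    using tg_open_left[OF tg] openin_interior_of by blast
  have m: "x \<in> (\<lambda>y. x + y) ` (T interior_of V')"
    using z by (metis add.right_neutral image_eqI)
  have "(\<lambda>y. x + y) ` (T interior_of V') \<subseteq> (\<lambda>y. x + y) ` V'"
    by (rule image_mono) (rule interior_of_subset)
  also have "(\<lambda>y. x + y) ` V' = V" unfolding V'_def image_image by (simp add: add.assoc[symmetric])
  finally show "\<exists>T0. openin T T0 \<and> x \<in> T0 \<and> T0 \<subseteq> V" using o m by blast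
qed




locale S2 =
  fixes T T' :: "('a::group_add) topology" and rho :: "'a \<Rightarrow> 'a \<Rightarrow> real" and Q :: "nat \<Rightarrow> 'a"
  assumes tg: "topological_group T" and tg': "topological_group T'"
    and sub: "\<And>U. openin T' U \<Longrightarrow> openin T U"
    and ms: "Metric_space UNIV rho"
    and mc: "Metric_space.mcomplete UNIV rho"
    and mt: "Metric_space.mtopology UNIV rho = T"
    and dense: "T closure_of (range Q) = UNIV"
    and cm': "completely_metrizable_space T'"
begin

definition st :: "'a set \<Rightarrow> 'a set" where
  "st V = T' interior_of (T' closure_of V)"

definition mb :: "'a \<Rightarrow> real \<Rightarrow> 'a set" where "mb x r = {y. rho x y < r}"

lemma rho_commute: "rho x y = rho y x" using Metric_space.commute[OF ms] by blast
lemma rho_tri: "rho x z \<le> rho x y + rho y z" using Metric_space.triangle[OF ms] by blast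
lemma rho_nonneg: "0 \<le> rho x y" using Metric_space.nonneg[OF ms] by blast
lemma rho_self: "rho x x = 0" using Metric_space.zero[OF ms] by blast

lemma openT_iff: "openin T U \<longleftrightarrow> (\<forall>x\<in>U. \<exists>r>0. mb x r \<subseteq> U)"
proof -
  have "openin T U \<longleftrightarrow> (\<forall>x. x \<in> U \<longrightarrow> (\<exists>r>0. Metric_space.mball UNIV rho x r \<subseteq> U))"
    using Metric_space.openin_mtopology[OF ms, of U] by (simp add: mt)
  moreover have "Metric_space.mball UNIV rho x r = mb x r" for x r
    by (simp add: Metric_space.mball_def[OF ms] mb_def)
  ultimately show ?thesis by blast
qed

lemma open_mb: "openin T (mb x r)"
proof -
  have "Metric_space.mball UNIV rho x r = mb x r"
    by (simp add: Metric_space.mball_def[OF ms] mb_def)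
  then show ?thesis using Metric_space.openin_mball[OF ms, of x r] by (simp add: mt)
qed

lemma hausdorff': "Hausdorff_space T'"
  using cm' completely_metrizable_imp_metrizable_space metrizable_imp_Hausdorff_space by blast

lemma top: "topspace T = UNIV" "topspace T' = UNIV"
  using tg tg' by (auto simp: tg_top)

lemma diff_cont: assumes "topological_group X"
  shows "continuous_map (prod_topology X X) X (\<lambda>(x, y). -x + y)"
proof -
  have "continuous_map (prod_topology X X) (prod_topology X X) (\<lambda>p. (- fst p, snd p))"
    by (intro continuous_map_pairedI continuous_map_compose[OF continuous_map_fst tg_uminus[OF assms],
        unfolded o_def] continuous_map_snd)
  from continuous_map_compose[OF this tg_add[OF assms]] show ?thesis
    unfolding case_prod_unfold by (simp add: o_def)
qed

lemma cover: assumes "openin T B" "0 \<in> B" shows "\<exists>n. -Q n + g \<in> B"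
proof -
  have cm: "continuous_map T T (\<lambda>c. -c + g)"
    using continuous_map_compose[OF tg_uminus[OF tg] tg_right[OF tg, of g]]
    by (simp add: o_def)
  have "openin T {c. -c + g \<in> B}" using tg_open_pre[OF tg cm assms(1)] .
  moreover have "g \<in> {c. -c + g \<in> B}" using assms(2) by simp
  moreover have "\<forall>S. openin T S \<and> S \<noteq> {} \<longrightarrow> range Q \<inter> S \<noteq> {}"
    using dense top(1) dense_intersects_open[of T "range Q"] by simp
  ultimately have "range Q \<inter> {c. -c + g \<in> B} \<noteq> {}" by blast
  then show ?thesis by blast
qed

lemma partA: assumes "openin T V" shows "V \<subseteq> st V"
proof
  fix v assume v: "v \<in> V"
  define V0 where "V0 = (\<lambda>y. -v + y) ` V"
  have oV0: "openin T V0" unfolding V0_def using tg_open_left[OF tg assms] .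
  have "0 \<in> V0" unfolding V0_def using v by (metis image_eqI left_minus)
  then obtain W1 W2 where W: "openin T W1" "openin T W2" "0 \<in> W1" "0 \<in> W2"
      "\<forall>x\<in>W1. \<forall>y\<in>W2. x + y \<in> V0"
    using tg_split[OF tg oV0, of 0 0] by auto
  define B where "B = {x. -x \<in> W1} \<inter> W2"
  have oB: "openin T B" unfolding B_def
    using tg_open_pre[OF tg tg_uminus[OF tg] W(1)] W(2) by (rule openin_Int)
  have B0: "0 \<in> B" using W by (simp add: B_def)
  have BB: "\<forall>x\<in>B. \<forall>y\<in>B. -x + y \<in> V0" using W(5) by (auto simp: B_def)
  define F where "F n = T' closure_of ((\<lambda>y. Q n + y) ` B)" for n
  have UF: "\<Union>(range F) = UNIV"
  proof -
    have "g \<in> \<Union>(range F)" for g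
    proof -
      obtain n where n: "-Q n + g \<in> B" using cover[OF oB B0] by blast
      have "g = Q n + (-Q n + g)" by (simp add: add.assoc[symmetric])
      then have "g \<in> (\<lambda>y. Q n + y) ` B" using n by blast
      then have "g \<in> F n" unfolding F_def using closure_of_subset[of "(\<lambda>y. Q n + y) ` B" T']
        by (auto simp: top)
      then show ?thesis by blast
    qed
    then show ?thesis by blast
  qed
  have "\<exists>n. T' interior_of F n \<noteq> {}"
  proof (rule ccontr)
    assume "\<not> ?thesis"
    then have "T' interior_of \<Union>(range F) = {}"
      by (intro Baire_category_alt) (auto simp: cm' F_def)
    then show False using UF by (simp add: top interior_of_topspace[of T', unfolded top])
  qed
  then obtain n where "T' interior_of F n \<noteq> {}" by blast
  moreover have "T' interior_of F n = (\<lambda>y. Q n + y) ` (T' interior_of (T' closure_of B))"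
    unfolding F_def tg_closure_left[OF tg'] tg_interior_left[OF tg'] ..
  ultimately obtain w where w: "w \<in> T' interior_of (T' closure_of B)" by blast
  define N where "N = (\<lambda>y. -w + y) ` (T' interior_of (T' closure_of B))"
  have oN: "openin T' N" unfolding N_def using tg_open_left[OF tg' openin_interior_of] .
  have N0: "0 \<in> N" unfolding N_def using w by (metis image_eqI left_minus)
  have "N \<subseteq> T' closure_of V0"
  proof
    fix z assume "z \<in> N"
    then obtain w1 where w1: "w1 \<in> T' interior_of (T' closure_of B)" "z = -w + w1"
      unfolding N_def by blast
    have "w \<in> T' closure_of B" "w1 \<in> T' closure_of B"
      using w w1(1) interior_of_subset[of T' "T' closure_of B"] by auto
    then have "(w, w1) \<in> prod_topology T' T' closure_of (B \<times> B)"
      unfolding closure_of_Times by simp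
    then have "(\<lambda>(x, y). -x + y) (w, w1) \<in> T' closure_of ((\<lambda>(x, y). -x + y) ` (B \<times> B))"
      using continuous_map_image_closure_subset[OF diff_cont[OF tg']] by blast
    moreover have "(\<lambda>(x, y). -x + y) ` (B \<times> B) \<subseteq> V0" using BB by auto
    ultimately have "(\<lambda>(x, y). -x + y) (w, w1) \<in> T' closure_of V0"
      using closure_of_mono[of "(\<lambda>(x, y). -x + y) ` (B \<times> B)" V0 T'] by blast
    then show "z \<in> T' closure_of V0" using w1(2) by simp
  qed
  then have "(\<lambda>y. v + y) ` N \<subseteq> (\<lambda>y. v + y) ` (T' closure_of V0)" by (rule image_mono)
  also have "\<dots> = T' closure_of ((\<lambda>y. v + y) ` V0)" using tg_closure_left[OF tg'] by metis
  also have "(\<lambda>y. v + y) ` V0 = V" unfolding V0_def image_image by (simp add: add.assoc[symmetric])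
  finally have sub1: "(\<lambda>y. v + y) ` N \<subseteq> T' closure_of V" .
  have "openin T' ((\<lambda>y. v + y) ` N)" using tg_open_left[OF tg' oN] .
  then have "(\<lambda>y. v + y) ` N \<subseteq> st V" unfolding st_def using sub1 by (rule interior_of_maximal[rotated])
  moreover have "v \<in> (\<lambda>y. v + y) ` N" using N0 by (metis add.right_neutral image_eqI)
  ultimately show "v \<in> st V" by blast
qed

end



context S2 begin

definition cen :: "nat \<Rightarrow> 'a" where "cen j = Q (fst (prod_decode j))"
definition rad :: "nat \<Rightarrow> real" where "rad j = 1 / (real (snd (prod_decode j)) + 1)"
definition mcb :: "'a \<Rightarrow> real \<Rightarrow> 'a set" where "mcb x r = {y. rho x y \<le> r}"
definition valid :: "'a set \<Rightarrow> nat \<Rightarrow> nat \<Rightarrow> bool" where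
  "valid S n j \<longleftrightarrow> mcb (cen j) (rad j) \<subseteq> S \<and> rad j \<le> 1 / (real n + 1)"

primrec Of :: "'a set \<Rightarrow> nat list \<Rightarrow> 'a set" where
  "Of A [] = A"
| "Of A (j # js) = (if valid (Of A js) (length js) j then mb (cen j) (rad j) else {})"

primrec Df :: "'a set \<Rightarrow> nat list \<Rightarrow> 'a set" where
  "Df A [] = st A"
| "Df A (j # js) = (Df A js \<inter> st (Of A (j # js))) - T' closure_of (\<Union>i\<in>{..<j}. st (Of A (i # js)))"

lemma rad_pos: "rad j > 0" by (simp add: rad_def)

lemma Of_open: "openin T A \<Longrightarrow> openin T (Of A js)"
  by (induction js) (auto simp: open_mb)

lemma st_open: "openin T' (st V)" by (simp add: st_def)

lemma st_cl: "st V \<subseteq> T' closure_of V"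
  unfolding st_def by (rule interior_of_subset)

lemma Df_open: "openin T' (Df A js)"
proof (induction js)
  case Nil then show ?case by (simp add: st_open)
next
  case (Cons j js)
  have "openin T' (Df A js \<inter> st (Of A (j # js)))" using Cons st_open by (rule openin_Int)
  then show ?case by (simp only: Df.simps) (rule openin_diff[OF _ closedin_closure_of])
qed

lemma Df_mono: "Df A (j # js) \<subseteq> Df A js" by auto

lemma Df_st: "Df A js \<subseteq> st (Of A js)"
  by (cases js) auto

lemma Df_cl: "Df A js \<subseteq> T' closure_of (Of A js)"
  using Df_st st_cl by blast

lemma sib_disj: assumes "i < j" shows "Df A (i # js) \<inter> Df A (j # js) = {}"
proof -
  have "Df A (i # js) \<subseteq> (\<Union>i\<in>{..<j}. st (Of A (i # js)))"
    using Df_st[of A "i # js"] assms by blast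
  also have "\<dots> \<subseteq> T' closure_of (\<Union>i\<in>{..<j}. st (Of A (i # js)))"
    by (rule closure_of_subset) (simp add: top)
  finally show ?thesis by auto
qed

lemma Df_uniq: "length a = length b \<Longrightarrow> y \<in> Df A a \<Longrightarrow> y \<in> Df A b \<Longrightarrow> a = b"
proof (induction a arbitrary: b)
  case Nil then show ?case by simp
next
  case (Cons j js)
  then obtain j' js' where b: "b = j' # js'" by (cases b) auto
  have "js = js'" using Cons.IH[of js'] Cons.prems Df_mono b by (metis length_Cons nat.inject subsetD)
  moreover have "j = j'"
  proof (rule ccontr)
    assume "j \<noteq> j'"
    then have "j < j' \<or> j' < j" by arith
    then show False using sib_disj[of j j' A js] sib_disj[of j' j A js] Cons.prems b \<open>js = js'\<close> by blast
  qed
  ultimately show ?case using b by simp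
qed


lemma dense_Q: "\<forall>S. openin T S \<and> S \<noteq> {} \<longrightarrow> range Q \<inter> S \<noteq> {}"
  using dense top(1) dense_intersects_open[of T "range Q"] by simp

lemma arch2: assumes "r > 0" obtains m :: nat where "2 / (real m + 1) < r" "k \<le> m"
proof -
  obtain m0 :: nat where m0: "2 / r < real m0" using reals_Archimedean2 by blast
  define m where "m = max m0 k"
  have "2 / r < real m + 1" using m0 by (simp add: m_def)
  then have "2 < r * (real m + 1)" using assms by (simp add: divide_less_eq mult.commute)
  then have "2 / (real m + 1) < r" by (simp add: divide_less_eq mult.commute)
  moreover have "k \<le> m" by (simp add: m_def)
  ultimately show ?thesis using that by blast
qed

lemma two_div: "2 / (real m + 1) = 1 / (real m + 1) + 1 / (real m + 1)"
  by (simp add: add_divide_distrib[symmetric])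

lemma inv_mono: "k \<le> m \<Longrightarrow> 1 / (real m + 1) \<le> 1 / (real k + 1)"
  by (simp add: frac_le)

lemma dens: assumes "openin T A" shows "Df A js \<subseteq> T' closure_of (\<Union>j. Df A (j # js))"
proof
  fix y assume y: "y \<in> Df A js"
  show "y \<in> T' closure_of (\<Union>j. Df A (j # js))"
    unfolding in_closure_of
  proof (intro conjI allI impI)
    show "y \<in> topspace T'" by (simp add: top)
    fix N assume N: "y \<in> N \<and> openin T' N"
    define W where "W = N \<inter> Df A js"
    have oW: "openin T' W" unfolding W_def using N Df_open[of A js] by (simp add: openin_Int)
    have yW: "y \<in> W" using N y by (simp add: W_def)
    have "W \<inter> T' closure_of (Of A js) \<noteq> {}" using yW Df_cl[of A js] unfolding W_def by blast
    then have "W \<inter> Of A js \<noteq> {}" using openin_Int_closure_of_eq_empty[OF oW] by simp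
    then obtain p where p: "p \<in> W" "p \<in> Of A js" by blast
    obtain r where r: "r > 0" "mb p r \<subseteq> Of A js"
      using Of_open[OF assms, of js] p(2) openT_iff by blast
    obtain m :: nat where m: "2 / (real m + 1) < r" "length js \<le> m" using arch2[OF r(1)] by blast
    have "p \<in> mb p (1 / (real m + 1))" by (simp add: mb_def rho_self)
    then have "range Q \<inter> mb p (1 / (real m + 1)) \<noteq> {}" using dense_Q open_mb by blast
    then obtain i where i: "rho p (Q i) < 1 / (real m + 1)" by (auto simp: mb_def)
    define j where "j = prod_encode (i, m)"
    have cj: "cen j = Q i" "rad j = 1 / (real m + 1)" by (simp_all add: j_def cen_def rad_def)
    have "mcb (Q i) (1 / (real m + 1)) \<subseteq> mb p r"
    proof
      fix z assume "z \<in> mcb (Q i) (1 / (real m + 1))"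
      then have "rho (Q i) z \<le> 1 / (real m + 1)" by (simp add: mcb_def)
      then have "rho p z < 2 / (real m + 1)" using rho_tri[where x=p and y="Q i" and z=z] i two_div[of m] by linarith
      then show "z \<in> mb p r" using m(1) by (simp add: mb_def)
    qed
    then have valid: "valid (Of A js) (length js) j"
      using r(2) cj inv_mono[OF m(2)] unfolding valid_def by auto
    have pj: "p \<in> Of A (j # js)" using valid cj i by (simp add: mb_def rho_commute)
    then have "p \<in> st (Of A (j # js))" using partA[OF Of_open[OF assms, of "j # js"]] by blast
    then have ex: "\<exists>j. W \<inter> st (Of A (j # js)) \<noteq> {}" using p(1) by blast
    define j0 where "j0 = (LEAST j. W \<inter> st (Of A (j # js)) \<noteq> {})"
    have j0: "W \<inter> st (Of A (j0 # js)) \<noteq> {}" unfolding j0_def by (rule LeastI_ex[OF ex])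
    have lt: "W \<inter> st (Of A (i # js)) = {}" if "i < j0" for i
      using not_less_Least[OF that[unfolded j0_def]] by blast
    then have "W \<inter> (\<Union>i\<in>{..<j0}. st (Of A (i # js))) = {}" by blast
    then have cl: "W \<inter> T' closure_of (\<Union>i\<in>{..<j0}. st (Of A (i # js))) = {}"
      using openin_Int_closure_of_eq_empty[OF oW] by simp
    obtain z where z: "z \<in> W" "z \<in> st (Of A (j0 # js))" using j0 by blast
    have "z \<in> Df A (j0 # js)" using z cl unfolding W_def by auto
    then show "\<exists>z. z \<in> (\<Union>j. Df A (j # js)) \<and> z \<in> N" using z unfolding W_def by blast
  qed
qed


definition Z :: "'a set \<Rightarrow> nat \<Rightarrow> 'a set" where "Z A n = \<Union>(Df A ` {js. length js = n})"

lemma Z_open: "openin T' (Z A n)"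
  unfolding Z_def by (rule openin_Union) (auto simp: Df_open)

lemma Z0: "Z A 0 = st A" by (simp add: Z_def)

lemma Z_step: assumes "openin T A" shows "Z A n \<subseteq> T' closure_of (Z A (Suc n))"
proof
  fix y assume "y \<in> Z A n"
  then obtain js where js: "length js = n" "y \<in> Df A js" by (auto simp: Z_def)
  have "Df A (j # js) \<subseteq> Z A (Suc n)" for j
    unfolding Z_def using js(1) by (intro Union_upper) (simp add: image_iff exI[of _ "j # js"])
  then have "(\<Union>j. Df A (j # js)) \<subseteq> Z A (Suc n)" by blast
  then have "T' closure_of (\<Union>j. Df A (j # js)) \<subseteq> T' closure_of (Z A (Suc n))" by (rule closure_of_mono)
  then show "y \<in> T' closure_of (Z A (Suc n))" using dens[OF assms, of js] js(2) by blast
qed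

lemma Z_dense: assumes "openin T A" shows "st A \<subseteq> T' closure_of (Z A n)"
proof (induction n)
  case 0 then show ?case unfolding Z0 by (rule closure_of_subset) (simp add: top)
next
  case (Suc n)
  have "T' closure_of (Z A n) \<subseteq> T' closure_of (Z A (Suc n))"
    by (rule closure_of_minimal[OF Z_step[OF assms] closedin_closure_of])
  then show ?case using Suc by blast
qed


lemma chain: assumes A: "openin T A" and yZ: "\<forall>n. y \<in> Z A n" shows "y \<in> A"
proof -
  define path where "path = rec_nat [] (\<lambda>n p. (SOME j. y \<in> Df A (j # p)) # p)"
  have path0: "path 0 = []" by (simp add: path_def)
  have pathS: "path (Suc n) = (SOME j. y \<in> Df A (j # path n)) # path n" for n
    by (simp add: path_def)
  have P: "length (path n) = n \<and> y \<in> Df A (path n)" for n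
  proof (induction n)
    case 0 show ?case using yZ[rule_format, of 0] by (simp add: path0 Z0)
  next
    case (Suc n)
    obtain js where js: "length js = Suc n" "y \<in> Df A js"
      using yZ[rule_format, of "Suc n"] by (auto simp: Z_def)
    then obtain j ks where jks: "js = j # ks" by (cases js) auto
    have ks: "length ks = n" "y \<in> Df A ks" using js jks Df_mono[of A j ks] by auto
    have "ks = path n" using Df_uniq[of ks "path n" y A] ks Suc.IH by simp
    then have "\<exists>j. y \<in> Df A (j # path n)" using js jks by blast
    then have "y \<in> Df A ((SOME j. y \<in> Df A (j # path n)) # path n)" by (rule someI_ex)
    then show ?case using Suc.IH by (simp add: pathS)
  qed
  define jn where "jn n = (SOME j. y \<in> Df A (j # path n))" for n
  have pS: "path (Suc n) = jn n # path n" for n by (simp add: pathS jn_def)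
  define Os where "Os n = Of A (path n)" for n
  have ycl: "y \<in> T' closure_of (Os n)" for n using P[of n] Df_cl[of A "path n"] unfolding Os_def by blast
  have OsS0: "Os (Suc n) = (if valid (Os n) n (jn n) then mb (cen (jn n)) (rad (jn n)) else {})" for n
    using P[of n] by (simp add: Os_def pS)
  have ne: "Os (Suc n) \<noteq> {}" for n using ycl[of "Suc n"] by auto
  have vn: "valid (Os n) n (jn n)" for n using OsS0[of n] ne[of n] by presburger
  define c where "c n = cen (jn n)" for n
  define r where "r n = rad (jn n)" for n
  have OsS: "Os (Suc n) = mb (c n) (r n)" for n using OsS0[of n] vn[of n] by (simp add: c_def r_def)
  have r_pos: "r n > 0" for n by (simp add: r_def rad_pos)
  have r_le: "r n \<le> 1 / (real n + 1)" for n using vn[of n] by (simp add: valid_def r_def)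
  have cb: "mcb (c n) (r n) \<subseteq> Os n" for n using vn[of n] by (simp add: valid_def r_def c_def)
  have dec: "Os (Suc n) \<subseteq> Os n" for n
  proof -
    have "mb (c n) (r n) \<subseteq> mcb (c n) (r n)" by (auto simp: mb_def mcb_def)
    then show ?thesis using cb[of n] OsS[of n] by blast
  qed
  have decm: "n \<le> m \<Longrightarrow> Os m \<subseteq> Os n" for n m
    using lift_Suc_antimono_le[of Os, OF dec] by blast
  have close: "rho (c n) (c m) < r n" if "n \<le> m" for n m
  proof -
    have "c m \<in> Os (Suc m)" using r_pos[of m] by (simp add: OsS mb_def rho_self)
    then have "c m \<in> Os (Suc n)" using decm[of "Suc n" "Suc m"] that by auto
    then show ?thesis by (simp add: OsS mb_def)
  qed
  have cauchy: "Metric_space.MCauchy UNIV rho c"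
    unfolding Metric_space.MCauchy_def[OF ms]
  proof (intro conjI allI impI)
    fix e :: real assume e: "e > 0"
    obtain N :: nat where N: "2 / (real N + 1) < e" using arch2[OF e, of 0] by blast
    have "rho (c n) (c n') < e" if "N \<le> n" "N \<le> n'" for n n'
    proof -
      have "rho (c n) (c n') \<le> rho (c n) (c N) + rho (c N) (c n')"
        by (rule rho_tri)
      also have "\<dots> = rho (c N) (c n) + rho (c N) (c n')" by (simp add: rho_commute)
      also have "\<dots> < r N + r N" using close[OF that(1)] close[OF that(2)] by simp
      also have "\<dots> \<le> 2 / (real N + 1)" using r_le[of N] two_div[of N] by linarith
      finally show ?thesis using N by linarith
    qed
    then show "\<exists>N. \<forall>n n'. N \<le> n \<longrightarrow> N \<le> n' \<longrightarrow> rho (c n) (c n') < e" by blast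
  qed simp
  obtain p where lim: "limitin (Metric_space.mtopology UNIV rho) c p sequentially"
    using mc cauchy unfolding Metric_space.mcomplete_def[OF ms] by blast
  have lm: "\<exists>M. \<forall>m\<ge>M. rho (c m) p < e" if "e > 0" for e
  proof -
    have "\<forall>\<^sub>F m in sequentially. c m \<in> UNIV \<and> rho (c m) p < e"
      using lim that unfolding Metric_space.limitin_metric[OF ms] by blast
    then show ?thesis unfolding eventually_sequentially by blast
  qed
  have pin: "rho (c n) p \<le> r n" for n
  proof (rule field_le_epsilon)
    fix e :: real assume "e > 0"
    then obtain M where M: "\<forall>m\<ge>M. rho (c m) p < e" using lm by blast
    define m where "m = max M n"
    have "rho (c n) p \<le> rho (c n) (c m) + rho (c m) p" by (rule rho_tri)
    also have "\<dots> < r n + e" using close[of n m] M m_def by (simp add: add_strict_mono)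
    finally show "rho (c n) p \<le> r n + e" by simp
  qed
  have pOs: "p \<in> Os n" for n using pin[of n] cb[of n] by (auto simp: mcb_def)
  have "y = p"
  proof (rule ccontr)
    assume "y \<noteq> p"
    have H: "\<forall>x y. x \<in> UNIV \<and> y \<in> UNIV \<and> x \<noteq> y \<longrightarrow>
          (\<exists>U V. openin T' U \<and> openin T' V \<and> x \<in> U \<and> y \<in> V \<and> disjnt U V)"
      using hausdorff' unfolding Hausdorff_space_def top .
    have "\<exists>U V. openin T' U \<and> openin T' V \<and> p \<in> U \<and> y \<in> V \<and> disjnt U V"
      using H[rule_format, of p y] \<open>y \<noteq> p\<close> by auto
    then obtain U V where UV: "openin T' U" "openin T' V" "p \<in> U" "y \<in> V" "disjnt U V"
      by blast
    obtain e where e: "e > 0" "mb p e \<subseteq> U" using openT_iff[of U] sub[OF UV(1)] UV(3) by blast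
    obtain n :: nat where n: "2 / (real n + 1) < e" using arch2[OF e(1), of 0] by blast
    have "Os (Suc n) \<subseteq> U"
    proof
      fix z assume "z \<in> Os (Suc n)"
      then have z: "rho (c n) z < r n" by (simp add: OsS mb_def)
      have "rho p z \<le> rho p (c n) + rho (c n) z" by (rule rho_tri)
      also have "\<dots> < r n + r n" using pin[of n] z by (simp add: rho_commute)
      also have "\<dots> \<le> 2 / (real n + 1)" using r_le[of n] two_div[of n] by linarith
      finally have "z \<in> mb p e" using n by (simp add: mb_def)
      then show "z \<in> U" using e(2) by blast
    qed
    then have "y \<in> T' closure_of U" using ycl[of "Suc n"] closure_of_mono by blast
    moreover have "V \<inter> T' closure_of U = {}"
      using openin_Int_closure_of_eq_empty[OF UV(2)] UV(5) by (simp add: disjnt_def Int_commute)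
    ultimately show False using UV(4) by blast
  qed
  moreover have "Os 0 = A" by (simp add: Os_def path0)
  ultimately show "y \<in> A" using pOs[of 0] by simp
qed


lemma pettis: assumes A: "openin T A" "0 \<in> A" and g: "g \<in> st A"
  shows "\<exists>a\<in>A. \<exists>b\<in>A. g = a + - b"
proof -
  define G where "G n = Z A n \<union> (UNIV - T' closure_of (st A))" for n
  define H where "H n = (\<lambda>x. g + x) ` G n" for n
  have oG: "openin T' (G n)" for n
  proof -
    have "openin T' (topspace T' - T' closure_of (st A))"
      by (rule openin_diff[OF openin_topspace closedin_closure_of])
    then show ?thesis unfolding G_def top by (intro openin_Un Z_open)
  qed
  have dG: "T' closure_of (G n) = UNIV" for n
  proof -
    have "T' closure_of (st A) \<subseteq> T' closure_of (Z A n)"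
      by (rule closure_of_minimal[OF Z_dense[OF A(1)] closedin_closure_of])
    moreover have "UNIV - T' closure_of (st A) \<subseteq> T' closure_of (UNIV - T' closure_of (st A))"
      by (rule closure_of_subset) (simp add: top)
    ultimately show ?thesis unfolding G_def closure_of_Un by blast
  qed
  have oH: "openin T' (H n)" for n unfolding H_def by (rule tg_open_left[OF tg' oG])
  have dH: "T' closure_of (H n) = UNIV" for n
  proof -
    have "T' closure_of (H n) = (\<lambda>x. g + x) ` UNIV" unfolding H_def tg_closure_left[OF tg'] dG ..
    also have "\<dots> = UNIV"
    proof -
      have "x \<in> (\<lambda>x. g + x) ` UNIV" for x
        using image_eqI[of x "\<lambda>x. g + x" "-g + x" UNIV] by (simp add: add.assoc[symmetric])
      then show ?thesis by blast
    qed
    finally show ?thesis .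
  qed
  define \<G> where "\<G> = range G \<union> range H"
  have "T' closure_of \<Inter>\<G> = topspace T'"
  proof (rule Baire_category)
    show "completely_metrizable_space T' \<or> locally_compact_space T' \<and> regular_space T'"
      using cm' by blast
    show "countable \<G>" unfolding \<G>_def by simp
    fix S assume "S \<in> \<G>"
    then show "openin T' S \<and> T' closure_of S = topspace T'"
      unfolding \<G>_def using oG dG oH dH top by auto
  qed
  moreover define Ob where "Ob = st A \<inter> (\<lambda>x. g + x) ` st A"
  have oOb: "openin T' Ob" unfolding Ob_def using st_open tg_open_left[OF tg' st_open] by (rule openin_Int)
  have "0 \<in> st A" using partA[OF A(1)] A(2) by blast
  then have "g \<in> Ob" unfolding Ob_def using g by (metis add.right_neutral image_eqI IntI)
  ultimately have "\<Inter>\<G> \<inter> Ob \<noteq> {}"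
    unfolding dense_intersects_open using oOb by blast
  then obtain z where z: "z \<in> \<Inter>\<G>" "z \<in> Ob" by blast
  have stcl: "st A \<subseteq> T' closure_of (st A)" by (rule closure_of_subset) (simp add: top)
  have zst: "z \<in> st A" using z(2) by (simp add: Ob_def)
  have "z \<in> G n" for n using z(1) unfolding \<G>_def by blast
  then have "z \<in> Z A n" for n using zst stcl unfolding G_def by blast
  then have zA: "z \<in> A" using chain[OF A(1)] by blast
  obtain z' where z': "z' \<in> st A" "z = g + z'" using z(2) unfolding Ob_def by blast
  have "z' \<in> G n" for n
  proof -
    have "z \<in> H n" using z(1) unfolding \<G>_def by blast
    then obtain x where "x \<in> G n" "z = g + x" unfolding H_def by blast
    then show ?thesis using z'(2) by simp
  qed
  then have "z' \<in> Z A n" for n using z'(1) stcl unfolding G_def by blast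
  then have z'A: "z' \<in> A" using chain[OF A(1)] by blast
  have "g = z + - z'" using z'(2) by (simp add: add.assoc)
  then show ?thesis using zA z'A by blast
qed

lemma step2: assumes U: "openin T U" shows "openin T' U"
  unfolding openin_subopen[of T' U]
proof
  fix x assume x: "x \<in> U"
  define U0 where "U0 = (\<lambda>y. -x + y) ` U"
  have oU0: "openin T U0" unfolding U0_def using tg_open_left[OF tg U] .
  have "0 \<in> U0" unfolding U0_def using x by (metis image_eqI left_minus)
  then obtain W1 W2 where W: "openin T W1" "openin T W2" "0 \<in> W1" "0 \<in> W2"
      "\<forall>a\<in>W1. \<forall>b\<in>W2. a + b \<in> U0"
    using tg_split[OF tg oU0, of 0 0] by auto
  define A where "A = W1 \<inter> {y. -y \<in> W2}"
  have oA: "openin T A" unfolding A_def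
    using W(1) tg_open_pre[OF tg tg_uminus[OF tg] W(2)] by (rule openin_Int)
  have A0: "0 \<in> A" using W by (simp add: A_def)
  have stU0: "st A \<subseteq> U0"
  proof
    fix g assume "g \<in> st A"
    then obtain a b where "a \<in> A" "b \<in> A" "g = a + - b" using pettis[OF oA A0] by blast
    then have "a \<in> W1" "- b \<in> W2" by (simp_all add: A_def)
    then have "a + - b \<in> U0" using W(5) by blast
    then show "g \<in> U0" using \<open>g = a + - b\<close> by simp
  qed
  have z: "0 \<in> st A" using partA[OF oA] A0 by blast
  have o: "openin T' ((\<lambda>y. x + y) ` st A)" using tg_open_left[OF tg' st_open] .
  have m: "x \<in> (\<lambda>y. x + y) ` st A" using z by (metis add.right_neutral image_eqI)
  have "(\<lambda>y. x + y) ` st A \<subseteq> (\<lambda>y. x + y) ` U0" using stU0 by (rule image_mono)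
  also have "(\<lambda>y. x + y) ` U0 = U" unfolding U0_def image_image by (simp add: add.assoc[symmetric])
  finally show "\<exists>T0. openin T' T0 \<and> x \<in> T0 \<and> T0 \<subseteq> U" using o m by blast
qed

end



theorem corollary4p4:
  fixes T T' :: "('a::group_add) topology" and d :: "'a \<Rightarrow> 'a \<Rightarrow> real"
  assumes "polish_topometric_group T d"
    and "steinhaus_property T d"
    and "polish_topometric_group T' d"
  shows "T = T'"
proof -
  have tm: "topometric_group T d" and pT: "polish_topology T"
    using assms(1) by (auto simp: polish_topometric_group_def)
  have tm': "topometric_group T' d" and pT': "polish_topology T'"
    using assms(3) by (auto simp: polish_topometric_group_def)
  have tg: "topological_group T" and tg': "topological_group T'" using tm tm' by (auto intro: tm_tg)
  have sep': "separable_space T'" using pT' by (simp add: polish_topology_def)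
  have cm': "completely_metrizable_space T'" using pT' by (simp add: polish_topology_def)
  have sub: "openin T U" if "openin T' U" for U using step1[OF tm tm' assms(2) sep' that] .
  obtain M rho where M: "Metric_space M rho" "Metric_space.mcomplete M rho"
      "T = Metric_space.mtopology M rho"
    using pT unfolding polish_topology_def completely_metrizable_space_def by blast
  have "M = UNIV" using Metric_space.topspace_mtopology[OF M(1)] M(3) tg_top[OF tg] by simp
  then have M': "Metric_space UNIV rho" "Metric_space.mcomplete UNIV rho"
      "Metric_space.mtopology UNIV rho = T" using M by auto
  obtain C where C: "countable C" "T closure_of C = topspace T"
    using pT unfolding polish_topology_def separable_space_def by blast
  have "C \<noteq> {}"
  proof
    assume "C = {}"
    then have "topspace T = {}" using C(2) by simp
    then show False using tg_top[OF tg] by simp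
  qed
  then have rQ: "range (from_nat_into C) = C" using C(1) by (rule range_from_nat_into)
  have s2: "S2 T T' rho (from_nat_into C)"
    unfolding S2_def using tg tg' sub M' C rQ cm' tg_top[OF tg] by auto
  interpret S2 T T' rho "from_nat_into C" by (rule s2)
  show ?thesis unfolding topology_eq using sub step2 by blast
qed


end
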